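(* Let $(X_i)_{i\in\mathbb N}$, $(X'_i)_{i\in\mathbb N}$ and $Y$ be mutually independent random variables with $(X_i)_{i\in\mathbb N}\sim(X'_i)_{i\in\mathbb N}$. Suppose that for some $k\in\mathbb N$ there exists $\lambda>0$ with \[\prod_{i=k}^\infty\mathbb E\Big[e^{\lambda(X'_i-X_i)}\Big]<\infty.\] Then \[\mathbb P\Big(\exists j\in\mathbb N:\ Y+\sum_{i=1}^{k+j}X_i\le\sum_{i=k}^{k+j}X'_i\Big)\le\Big(\prod_{i=k}^\infty\mathbb E\Big[e^{\lambda(X'_i-X_i)}\Big]\Big)\,\mathbb E\Big[e^{-\lambda\left(Y+\sum_{i=1}^{k-1}X_i\right)}\Big].\] *)

theory Defs
  imports "HOL-Probability.Probability"
begin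

definition all_vars :: "(nat \<Rightarrow> 'a \<Rightarrow> real) \<Rightarrow> (nat \<Rightarrow> 'a \<Rightarrow> real) \<Rightarrow> ('a \<Rightarrow> real)
    \<Rightarrow> nat + nat + unit \<Rightarrow> 'a \<Rightarrow> real" where
  "all_vars X X' Y z = (case z of Inl i \<Rightarrow> X i | Inr (Inl i) \<Rightarrow> X' i | Inr (Inr _) \<Rightarrow> Y)"

definition all_idx :: "(nat + nat + unit) set" where
  "all_idx = Inl ` {1..} \<union> Inr ` (Inl ` {1..}) \<union> {Inr (Inr ())}"

end

theory Submission imports Defs begin

lemma (in prob_space) indep_var_nn_integral_enn:
  fixes X1 X2 :: "'a \<Rightarrow> ennreal"
  assumes "indep_var borel X1 borel X2"
  shows "(\<integral>\<^sup>+\<omega>. X1 \<omega> * X2 \<omega> \<partial>M) = (\<integral>\<^sup>+\<omega>. X1 \<omega> \<partial>M) * (\<integral>\<^sup>+\<omega>. X2 \<omega> \<partial>M)"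
proof -
  have *: "(\<lambda>\<omega>. X1 \<omega> * X2 \<omega>) = (\<lambda>\<omega>. \<Prod>i\<in>UNIV. (case_bool X1 X2 i \<omega>))"
    by (simp add: UNIV_bool mult.commute)
  have **: "(\<lambda> _. borel) = case_bool borel borel"
    by (rule ext, metis (full_types) bool.simps(3) bool.simps(4))
  have ind: "indep_vars (\<lambda>_. borel) (case_bool X1 X2) UNIV"
    using assms unfolding indep_var_def by (subst **)
  show ?thesis
    apply (subst *)
    apply (subst indep_vars_nn_integral[OF _ ind])
    by (auto simp: UNIV_bool mult.commute)
qed

locale lctx = prob_space M for M :: "'a measure" +
  fixes X X' :: "nat \<Rightarrow> 'a \<Rightarrow> real" and Y :: "'a \<Rightarrow> real" and k :: nat and lam :: real
  assumes indep: "indep_vars (\<lambda>_. borel) (all_vars X X' Y) all_idx"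
    and same_distr: "distr M (PiM {1..} (\<lambda>_. borel)) (\<lambda>\<omega>. \<lambda>i\<in>{1..}. X i \<omega>)
                   = distr M (PiM {1..} (\<lambda>_. borel)) (\<lambda>\<omega>. \<lambda>i\<in>{1..}. X' i \<omega>)"
    and k1: "k \<ge> 1" and lam: "lam > 0"
begin

abbreviation "V \<equiv> all_vars X X' Y"

lemma rv_V: "z \<in> all_idx \<Longrightarrow> V z \<in> borel_measurable M"
  using indep unfolding indep_vars_def by auto

lemma rv_X: "1 \<le> i \<Longrightarrow> X i \<in> borel_measurable M"
  using rv_V[of "Inl i"] by (simp add: all_idx_def all_vars_def)
lemma rv_X': "1 \<le> i \<Longrightarrow> X' i \<in> borel_measurable M"
  using rv_V[of "Inr (Inl i)"] by (simp add: all_idx_def all_vars_def)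
lemma rv_Y[measurable]: "Y \<in> borel_measurable M"
  using rv_V[of "Inr (Inr ())"] by (simp add: all_idx_def all_vars_def)

lemma BL:
  fixes F G :: "(nat + nat + unit \<Rightarrow> real) \<Rightarrow> ennreal"
  assumes "A \<inter> B = {}" "A \<subseteq> all_idx" "B \<subseteq> all_idx"
    and F: "F \<in> borel_measurable (PiM A (\<lambda>_. borel))"
    and G: "G \<in> borel_measurable (PiM B (\<lambda>_. borel))"
  shows "(\<integral>\<^sup>+\<omega>. F (restrict (\<lambda>z. V z \<omega>) A) * G (restrict (\<lambda>z. V z \<omega>) B) \<partial>M)
       = (\<integral>\<^sup>+\<omega>. F (restrict (\<lambda>z. V z \<omega>) A) \<partial>M) * (\<integral>\<^sup>+\<omega>. G (restrict (\<lambda>z. V z \<omega>) B) \<partial>M)"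
proof -
  have "indep_var (PiM A (\<lambda>_. borel)) (\<lambda>\<omega>. restrict (\<lambda>z. V z \<omega>) A)
                  (PiM B (\<lambda>_. borel)) (\<lambda>\<omega>. restrict (\<lambda>z. V z \<omega>) B)"
    by (rule indep_var_restrict[OF indep]) (use assms in auto)
  then have "indep_var borel (F \<circ> (\<lambda>\<omega>. restrict (\<lambda>z. V z \<omega>) A)) borel (G \<circ> (\<lambda>\<omega>. restrict (\<lambda>z. V z \<omega>) B))"
    by (rule indep_var_compose[OF _ F G])
  from indep_var_nn_integral_enn[OF this] show ?thesis by (simp add: comp_def)
qed

lemma marginal:
  fixes f :: "real \<Rightarrow> ennreal"
  assumes i: "1 \<le> i" and f[measurable]: "f \<in> borel_measurable borel"
  shows "(\<integral>\<^sup>+\<omega>. f (X' i \<omega>) \<partial>M) = (\<integral>\<^sup>+\<omega>. f (X i \<omega>) \<partial>M)"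
proof -
  have mX: "(\<lambda>\<omega>. \<lambda>i\<in>{1..}. X i \<omega>) \<in> measurable M (PiM {1..} (\<lambda>_. borel))"
    by (rule measurable_restrict) (auto intro: rv_X)
  have mX': "(\<lambda>\<omega>. \<lambda>i\<in>{1..}. X' i \<omega>) \<in> measurable M (PiM {1..} (\<lambda>_. borel))"
    by (rule measurable_restrict) (auto intro: rv_X')
  have mf: "(\<lambda>x. f (x i)) \<in> borel_measurable (PiM {1..} (\<lambda>_. borel::real measure))"
    using i by (intro measurable_compose[OF measurable_component_singleton[of i "{1..}" "\<lambda>_. borel"] f]) auto
  have "(\<integral>\<^sup>+\<omega>. f (X i \<omega>) \<partial>M) = (\<integral>\<^sup>+x. f (x i) \<partial>distr M (PiM {1..} (\<lambda>_. borel)) (\<lambda>\<omega>. \<lambda>i\<in>{1..}. X i \<omega>))"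
    using i by (subst nn_integral_distr[OF mX]) (use mf in auto)
  also have "\<dots> = (\<integral>\<^sup>+x. f (x i) \<partial>distr M (PiM {1..} (\<lambda>_. borel)) (\<lambda>\<omega>. \<lambda>i\<in>{1..}. X' i \<omega>))"
    using same_distr by simp
  also have "\<dots> = (\<integral>\<^sup>+\<omega>. f (X' i \<omega>) \<partial>M)"
    using i by (subst nn_integral_distr[OF mX']) (use mf in auto)
  finally show ?thesis by simp
qed

end
context lctx begin

definition Zf :: "(nat + nat + unit \<Rightarrow> real) \<Rightarrow> real" where "Zf x = x (Inr (Inr ())) + (\<Sum>i=1..k-1. x (Inl i))"
definition Sf :: "nat \<Rightarrow> (nat + nat + unit \<Rightarrow> real) \<Rightarrow> real" where "Sf n x = (\<Sum>i=k..n. x (Inr (Inl i)) - x (Inl i))"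
definition Gf :: "nat \<Rightarrow> nat \<Rightarrow> (nat + nat + unit \<Rightarrow> real) \<Rightarrow> ennreal" where "Gf n N x = (\<Prod>i\<in>{n<..N}. ennreal (exp (lam * (x (Inr (Inl i)) - x (Inl i)))))"
definition "Bset n = insert (Inr (Inr ())) (Inl ` {1..n} \<union> Inr ` Inl ` {k..n})"
definition "Cset n N = Inl ` {n<..N} \<union> Inr ` Inl ` {n<..N}"

lemma comp_m: "z \<in> B \<Longrightarrow> (\<lambda>x. x z) \<in> borel_measurable (PiM B (\<lambda>_. borel::real measure))"
  by simp

lemma mZf: "k - 1 \<le> n \<Longrightarrow> Zf \<in> borel_measurable (PiM (Bset n) (\<lambda>_. borel))"
  unfolding Zf_def Bset_def by (intro borel_measurable_add borel_measurable_sum comp_m) auto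

lemma mSf: "m \<le> n \<Longrightarrow> Sf m \<in> borel_measurable (PiM (Bset n) (\<lambda>_. borel))"
  unfolding Sf_def Bset_def by (intro borel_measurable_diff borel_measurable_sum comp_m) (use k1 in auto)

lemma mGf: "Gf n N \<in> borel_measurable (PiM (Cset n N) (\<lambda>_. borel))"
  unfolding Gf_def Cset_def by measurable

lemma Zf_restrict: "k - 1 \<le> n \<Longrightarrow> Zf (restrict x (Bset n)) = Zf x"
  unfolding Zf_def Bset_def using k1 by (auto intro!: sum.cong)

lemma Sf_restrict: "m \<le> n \<Longrightarrow> Sf m (restrict x (Bset n)) = Sf m x"
  unfolding Sf_def Bset_def using k1 by (auto intro!: sum.cong)

lemma Gf_restrict: "Gf n N (restrict x (Cset n N)) = Gf n N x"
  unfolding Gf_def Cset_def by (auto intro!: prod.cong)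

lemma Zf_V: "Zf (\<lambda>z. V z \<omega>) = Y \<omega> + (\<Sum>i=1..k-1. X i \<omega>)"
  by (simp add: Zf_def all_vars_def)
lemma Sf_V: "Sf n (\<lambda>z. V z \<omega>) = (\<Sum>i=k..n. X' i \<omega> - X i \<omega>)"
  by (simp add: Sf_def all_vars_def)
lemma Gf_V: "Gf n N (\<lambda>z. V z \<omega>) = (\<Prod>i\<in>{n<..N}. ennreal (exp (lam * (X' i \<omega> - X i \<omega>))))"
  by (simp add: Gf_def all_vars_def)

lemma Cset_idx: "Cset n N \<subseteq> all_idx"
  unfolding Cset_def all_idx_def by auto

lemma Bset_idx: "Bset n \<subseteq> all_idx"
  unfolding Bset_def all_idx_def using k1 by auto

definition "m i = (\<integral>\<^sup>+\<omega>. ennreal (exp (lam * (X' i \<omega> - X i \<omega>))) \<partial>M)"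

lemma intG: "(\<integral>\<^sup>+\<omega>. Gf n N (\<lambda>z. V z \<omega>) \<partial>M) = (\<Prod>i\<in>{n<..N}. m i)"
proof (induction N)
  case 0
  then show ?case by (simp add: Gf_def emeasure_space_1)
next
  case (Suc N)
  show ?case
  proof (cases "n \<le> N")
    case False
    then have "{n<..Suc N} = {}" by auto
    then show ?thesis by (simp add: Gf_def emeasure_space_1)
  next
    case True
    then have ins: "{n<..Suc N} = insert (Suc N) {n<..N}" by auto
    have sing: "{N<..Suc N} = {Suc N}" by auto
    have "(\<integral>\<^sup>+\<omega>. Gf n (Suc N) (\<lambda>z. V z \<omega>) \<partial>M)
        = (\<integral>\<^sup>+\<omega>. Gf n N (restrict (\<lambda>z. V z \<omega>) (Cset n N)) * Gf N (Suc N) (restrict (\<lambda>z. V z \<omega>) (Cset N (Suc N))) \<partial>M)"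
      unfolding Gf_restrict by (simp add: Gf_def ins sing mult.commute)
    also have "\<dots> = (\<integral>\<^sup>+\<omega>. Gf n N (restrict (\<lambda>z. V z \<omega>) (Cset n N)) \<partial>M) * (\<integral>\<^sup>+\<omega>. Gf N (Suc N) (restrict (\<lambda>z. V z \<omega>) (Cset N (Suc N))) \<partial>M)"
      by (rule BL[OF _ Cset_idx Cset_idx mGf mGf]) (auto simp: Cset_def)
    also have "\<dots> = (\<Prod>i\<in>{n<..N}. m i) * m (Suc N)"
    proof -
      have "(\<integral>\<^sup>+\<omega>. Gf N (Suc N) (\<lambda>z. V z \<omega>) \<partial>M) = m (Suc N)"
        unfolding Gf_V sing m_def by simp
      then show ?thesis unfolding Gf_restrict Suc.IH by simp
    qed
    finally show ?thesis by (simp add: ins mult.commute)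
  qed
qed

lemma m_ge1:
  assumes i: "1 \<le> i"
  shows "1 \<le> m i"
proof -
  note [measurable] = rv_X[OF i] rv_X'[OF i]
  define Fa :: "(nat + nat + unit \<Rightarrow> real) \<Rightarrow> ennreal" where "Fa x = ennreal (exp (lam * x (Inr (Inl i))))" for x
  define Fb :: "(nat + nat + unit \<Rightarrow> real) \<Rightarrow> ennreal" where "Fb x = ennreal (exp (- lam * x (Inl i)))" for x
  define Fc :: "(nat + nat + unit \<Rightarrow> real) \<Rightarrow> ennreal" where "Fc x = ennreal (exp (lam * x (Inl i)))" for x
  define Fd :: "(nat + nat + unit \<Rightarrow> real) \<Rightarrow> ennreal" where "Fd x = ennreal (exp (- lam * x (Inr (Inl i))))" for x
  have sa: "{Inr (Inl i)} \<subseteq> all_idx" and sb: "{Inl i} \<subseteq> all_idx"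
    using i by (auto simp: all_idx_def)
  have ma: "Fa \<in> borel_measurable (PiM {Inr (Inl i)} (\<lambda>_. borel))" unfolding Fa_def by measurable
  have mb: "Fb \<in> borel_measurable (PiM {Inl i} (\<lambda>_. borel))" unfolding Fb_def by measurable
  have mc: "Fc \<in> borel_measurable (PiM {Inl i} (\<lambda>_. borel))" unfolding Fc_def by measurable
  have md: "Fd \<in> borel_measurable (PiM {Inr (Inl i)} (\<lambda>_. borel))" unfolding Fd_def by measurable
  have "m i = (\<integral>\<^sup>+\<omega>. Fa (restrict (\<lambda>z. V z \<omega>) {Inr (Inl i)}) * Fb (restrict (\<lambda>z. V z \<omega>) {Inl i}) \<partial>M)"
    unfolding m_def Fa_def Fb_def
    by (intro nn_integral_cong) (simp add: all_vars_def ennreal_mult' [symmetric] exp_add [symmetric] algebra_simps)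
  also have "\<dots> = (\<integral>\<^sup>+\<omega>. Fa (restrict (\<lambda>z. V z \<omega>) {Inr (Inl i)}) \<partial>M) * (\<integral>\<^sup>+\<omega>. Fb (restrict (\<lambda>z. V z \<omega>) {Inl i}) \<partial>M)"
    by (rule BL[OF _ sa sb ma mb]) auto
  also have "\<dots> = (\<integral>\<^sup>+\<omega>. ennreal (exp (lam * X' i \<omega>)) \<partial>M) * (\<integral>\<^sup>+\<omega>. ennreal (exp (- lam * X i \<omega>)) \<partial>M)"
    by (simp add: Fa_def Fb_def all_vars_def)
  also have "\<dots> = (\<integral>\<^sup>+\<omega>. ennreal (exp (lam * X i \<omega>)) \<partial>M) * (\<integral>\<^sup>+\<omega>. ennreal (exp (- lam * X' i \<omega>)) \<partial>M)"
    using marginal[OF i, of "\<lambda>x. ennreal (exp (lam * x))"] marginal[OF i, of "\<lambda>x. ennreal (exp (- lam * x))"]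
    by simp
  also have "\<dots> = (\<integral>\<^sup>+\<omega>. Fc (restrict (\<lambda>z. V z \<omega>) {Inl i}) \<partial>M) * (\<integral>\<^sup>+\<omega>. Fd (restrict (\<lambda>z. V z \<omega>) {Inr (Inl i)}) \<partial>M)"
    by (simp add: Fc_def Fd_def all_vars_def)
  also have "\<dots> = (\<integral>\<^sup>+\<omega>. Fc (restrict (\<lambda>z. V z \<omega>) {Inl i}) * Fd (restrict (\<lambda>z. V z \<omega>) {Inr (Inl i)}) \<partial>M)"
    by (rule BL[OF _ sb sa mc md, symmetric]) auto
  also have "\<dots> = (\<integral>\<^sup>+\<omega>. ennreal (exp (- lam * (X' i \<omega> - X i \<omega>))) \<partial>M)"
    unfolding Fc_def Fd_def
    by (intro nn_integral_cong) (simp add: all_vars_def ennreal_mult' [symmetric] exp_add [symmetric] algebra_simps)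
  finally have eq: "m i = (\<integral>\<^sup>+\<omega>. ennreal (exp (- lam * (X' i \<omega> - X i \<omega>))) \<partial>M)" .
  have "m i + m i = (\<integral>\<^sup>+\<omega>. ennreal (exp (lam * (X' i \<omega> - X i \<omega>))) + ennreal (exp (- lam * (X' i \<omega> - X i \<omega>))) \<partial>M)"
  proof -
    have "(\<integral>\<^sup>+\<omega>. ennreal (exp (lam * (X' i \<omega> - X i \<omega>))) + ennreal (exp (- lam * (X' i \<omega> - X i \<omega>))) \<partial>M)
      = (\<integral>\<^sup>+\<omega>. ennreal (exp (lam * (X' i \<omega> - X i \<omega>))) \<partial>M) + (\<integral>\<^sup>+\<omega>. ennreal (exp (- lam * (X' i \<omega> - X i \<omega>))) \<partial>M)"
      by (rule nn_integral_add) auto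
    moreover have a: "(\<integral>\<^sup>+\<omega>. ennreal (exp (lam * (X' i \<omega> - X i \<omega>))) \<partial>M) = m i" by (simp add: m_def)
    ultimately show ?thesis by (simp only: a eq[symmetric])
  qed
  also have "\<dots> \<ge> (\<integral>\<^sup>+\<omega>. 2 \<partial>M)"
  proof (intro nn_integral_mono)
    fix \<omega>
    let ?a = "lam * (X' i \<omega> - X i \<omega>)"
    have "2 \<le> exp ?a + exp (- ?a)"
      using exp_ge_add_one_self[of ?a] exp_ge_add_one_self[of "- ?a"] by linarith
    then have h1: "ennreal 2 \<le> ennreal (exp ?a + exp (- ?a))" by (rule ennreal_leI)
    have h2: "ennreal (exp ?a + exp (- ?a)) = ennreal (exp ?a) + ennreal (exp (- ?a))"
      by (rule ennreal_plus) auto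
    from h1 show "2 \<le> ennreal (exp ?a) + ennreal (exp (- lam * (X' i \<omega> - X i \<omega>)))"
      unfolding h2 by simp
  qed
  finally have two: "2 \<le> m i + m i" by (simp add: emeasure_space_1)
  show ?thesis
  proof (cases "m i")
    case (real r)
    have h2: "ennreal (r + r) = ennreal r + ennreal r"
      by (rule ennreal_plus) (use real in auto)
    have "ennreal 2 \<le> ennreal (r + r)" using two unfolding real h2 by simp
    then have "2 \<le> r + r" using real by (simp add: ennreal_le_iff)
    then have "1 \<le> r" by simp
    then show ?thesis using real by simp
  qed simp
qed

end
context lctx begin

definition "Cn n x \<longleftrightarrow> Zf x \<le> Sf n x \<and> (\<forall>j\<in>{k<..<n}. Sf j x < Zf x)"
definition "Fn n x = ennreal (exp (lam * (Sf n x - Zf x))) * indicator {x. Cn n x} x"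

lemma mFn: "k \<le> n \<Longrightarrow> Fn n \<in> borel_measurable (PiM (Bset n) (\<lambda>_. borel))"
proof -
  assume n: "k \<le> n"
  have mz[measurable]: "Zf \<in> borel_measurable (PiM (Bset n) (\<lambda>_. borel))" using n by (intro mZf) simp
  have ms[measurable]: "Sf n \<in> borel_measurable (PiM (Bset n) (\<lambda>_. borel))" by (intro mSf) simp
  have p1: "Measurable.pred (PiM (Bset n) (\<lambda>_. borel)) (\<lambda>x. Zf x \<le> Sf n x)"
    unfolding pred_def by (rule borel_measurable_le[OF mz ms])
  have p2: "Measurable.pred (PiM (Bset n) (\<lambda>_. borel)) (\<lambda>x. \<forall>j\<in>{k<..<n}. Sf j x < Zf x)"
  proof (rule pred_intros_finite(3))
    fix j assume "j \<in> {k<..<n}"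
    then have mj: "Sf j \<in> borel_measurable (PiM (Bset n) (\<lambda>_. borel))" by (intro mSf) simp
    show "Measurable.pred (PiM (Bset n) (\<lambda>_. borel)) (\<lambda>x. Sf j x < Zf x)"
      unfolding pred_def by (rule borel_measurable_less[OF mj mz])
  qed simp
  have [measurable]: "Measurable.pred (PiM (Bset n) (\<lambda>_. borel)) (Cn n)"
  proof -
    have "{x \<in> space (PiM (Bset n) (\<lambda>_. borel)). Cn n x} =
      {x \<in> space (PiM (Bset n) (\<lambda>_. borel)). Zf x \<le> Sf n x} \<inter> {x \<in> space (PiM (Bset n) (\<lambda>_. borel)). \<forall>j\<in>{k<..<n}. Sf j x < Zf x}"
      unfolding Cn_def by auto
    then show ?thesis using p1 p2 unfolding pred_def by auto
  qed
  show ?thesis unfolding Fn_def by measurable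
qed

definition "Z \<omega> = Y \<omega> + (\<Sum>i=1..k-1. X i \<omega>)"
definition "S n \<omega> = (\<Sum>i=k..n. X' i \<omega> - X i \<omega>)"
definition "A n = {\<omega>\<in>space M. Z \<omega> \<le> S n \<omega> \<and> (\<forall>j\<in>{k<..<n}. S j \<omega> < Z \<omega>)}"
definition "E N = {\<omega>\<in>space M. \<exists>n\<in>{k<..N}. Z \<omega> \<le> S n \<omega>}"
definition "W N \<omega> = ennreal (exp (lam * (S N \<omega> - Z \<omega>)))"

lemma mZ[measurable]: "Z \<in> borel_measurable M"
  unfolding Z_def by (intro borel_measurable_add borel_measurable_sum rv_Y rv_X) auto

lemma mS[measurable]: "S n \<in> borel_measurable M"
  unfolding S_def using k1 by (intro borel_measurable_diff borel_measurable_sum rv_X rv_X') auto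

lemma A_sets[measurable]: "A n \<in> sets M"
  unfolding A_def by measurable

lemma E_sets[measurable]: "E N \<in> sets M"
  unfolding E_def by measurable

lemma Fn_V:
  assumes n: "k \<le> n"
  shows "Fn n (restrict (\<lambda>z. V z \<omega>) (Bset n)) = ennreal (exp (lam * (S n \<omega> - Z \<omega>))) * indicator {\<omega>. Z \<omega> \<le> S n \<omega> \<and> (\<forall>j\<in>{k<..<n}. S j \<omega> < Z \<omega>)} \<omega>"
proof -
  have z: "Zf (restrict (\<lambda>z. V z \<omega>) (Bset n)) = Z \<omega>"
    using n by (subst Zf_restrict) (auto simp: Zf_V Z_def)
  have s: "Sf j (restrict (\<lambda>z. V z \<omega>) (Bset n)) = S j \<omega>" if "j \<le> n" for j
    using that by (subst Sf_restrict) (auto simp: Sf_V S_def)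
  have b: "(\<forall>j\<in>{k<..<n}. Sf j (restrict (\<lambda>z. V z \<omega>) (Bset n)) < Z \<omega>) = (\<forall>j\<in>{k<..<n}. S j \<omega> < Z \<omega>)"
    using s by auto
  show ?thesis unfolding Fn_def Cn_def by (simp add: z s b indicator_def)
qed

lemma sum_ind:
  assumes "\<omega> \<in> space M"
  shows "(\<Sum>n\<in>{k<..N}. indicator (A n) \<omega> :: ennreal) = indicator (E N) \<omega>"
proof (cases "\<omega> \<in> E N")
  case False
  then have "\<And>n. n \<in> {k<..N} \<Longrightarrow> \<omega> \<notin> A n" using assms by (auto simp: A_def E_def)
  then show ?thesis using False by simp
next
  case True
  define n0 where "n0 = (LEAST n. k < n \<and> n \<le> N \<and> Z \<omega> \<le> S n \<omega>)"
  have ex: "\<exists>n. k < n \<and> n \<le> N \<and> Z \<omega> \<le> S n \<omega>" using True by (auto simp: E_def)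
  have n0: "k < n0 \<and> n0 \<le> N \<and> Z \<omega> \<le> S n0 \<omega>"
    unfolding n0_def by (rule LeastI_ex[OF ex])
  have min: "\<And>n. k < n \<and> n \<le> N \<and> Z \<omega> \<le> S n \<omega> \<Longrightarrow> n0 \<le> n"
    unfolding n0_def by (rule Least_le)
  have iff: "\<omega> \<in> A n \<longleftrightarrow> n = n0" if "n \<in> {k<..N}" for n
  proof
    assume a: "\<omega> \<in> A n"
    then have "n0 \<le> n" using that by (intro min) (auto simp: A_def)
    moreover have "\<not> n0 < n"
    proof
      assume "n0 < n"
      then have "S n0 \<omega> < Z \<omega>" using a n0 by (auto simp: A_def)
      then show False using n0 by simp
    qed
    ultimately show "n = n0" by simp
  next
    assume "n = n0"
    moreover have "\<forall>j\<in>{k<..<n0}. S j \<omega> < Z \<omega>"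
    proof
      fix j assume j: "j \<in> {k<..<n0}"
      show "S j \<omega> < Z \<omega>"
      proof (rule ccontr)
        assume "\<not> S j \<omega> < Z \<omega>"
        then have "n0 \<le> j" using j n0 by (intro min) auto
        then show False using j by simp
      qed
    qed
    ultimately show "\<omega> \<in> A n" using n0 assms by (auto simp: A_def)
  qed
  have "(\<Sum>n\<in>{k<..N}. indicator (A n) \<omega> :: ennreal) = (\<Sum>n\<in>{k<..N}. if n = n0 then 1 else 0)"
    by (intro sum.cong) (auto simp: iff indicator_def)
  also have "\<dots> = 1" using n0 by simp
  finally show ?thesis using True by simp
qed

lemma prod_ge1: "1 \<le> (\<Prod>i\<in>{n<..N}. m i)"
  by (rule prod_ge_1) (auto intro: m_ge1)

lemma S_split:
  assumes "k \<le> n" "n \<le> N"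
  shows "S N \<omega> = S n \<omega> + (\<Sum>i\<in>{n<..N}. X' i \<omega> - X i \<omega>)"
proof -
  have "{k..N} = {k..n} \<union> {n<..N}" using assms by auto
  then show ?thesis unfolding S_def by (subst sum.union_disjoint[symmetric]) auto
qed

lemma prod_exp: "(\<Prod>i\<in>{n<..N}. ennreal (exp (lam * (X' i \<omega> - X i \<omega>)))) = ennreal (exp (lam * (\<Sum>i\<in>{n<..N}. X' i \<omega> - X i \<omega>)))"
  by (simp add: prod_ennreal exp_sum sum_distrib_left)

lemma bound_A:
  assumes n: "n \<in> {k<..N}"
  shows "emeasure M (A n) \<le> (\<integral>\<^sup>+\<omega>. indicator (A n) \<omega> * W N \<omega> \<partial>M)"
proof -
  have kn: "k \<le> n" and nN: "n \<le> N" using n by auto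
  have disj: "Bset n \<inter> Cset n N = {}" unfolding Bset_def Cset_def by auto
  have "emeasure M (A n) = (\<integral>\<^sup>+\<omega>. indicator (A n) \<omega> \<partial>M)" by simp
  also have "\<dots> \<le> (\<integral>\<^sup>+\<omega>. Fn n (restrict (\<lambda>z. V z \<omega>) (Bset n)) \<partial>M)"
  proof (intro nn_integral_mono)
    fix \<omega> assume "\<omega> \<in> space M"
    show "indicator (A n) \<omega> \<le> Fn n (restrict (\<lambda>z. V z \<omega>) (Bset n))"
      unfolding Fn_V[OF kn]
      by (auto simp: A_def indicator_def \<open>\<omega> \<in> space M\<close> intro!: ennreal_leI) (use lam in \<open>simp add: mult_nonneg_nonneg\<close>)
  qed
  also have "\<dots> \<le> (\<integral>\<^sup>+\<omega>. Fn n (restrict (\<lambda>z. V z \<omega>) (Bset n)) \<partial>M) * (\<integral>\<^sup>+\<omega>. Gf n N (restrict (\<lambda>z. V z \<omega>) (Cset n N)) \<partial>M)"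
    unfolding Gf_restrict intG using prod_ge1[of n N] by (metis mult.right_neutral mult_left_mono zero_le)
  also have "\<dots> = (\<integral>\<^sup>+\<omega>. Fn n (restrict (\<lambda>z. V z \<omega>) (Bset n)) * Gf n N (restrict (\<lambda>z. V z \<omega>) (Cset n N)) \<partial>M)"
    by (rule BL[OF disj Bset_idx Cset_idx mFn[OF kn] mGf, symmetric])
  also have "\<dots> = (\<integral>\<^sup>+\<omega>. indicator (A n) \<omega> * W N \<omega> \<partial>M)"
  proof (intro nn_integral_cong)
    fix \<omega> assume sp: "\<omega> \<in> space M"
    show "Fn n (restrict (\<lambda>z. V z \<omega>) (Bset n)) * Gf n N (restrict (\<lambda>z. V z \<omega>) (Cset n N)) = indicator (A n) \<omega> * W N \<omega>"
      unfolding Fn_V[OF kn] Gf_restrict Gf_V prod_exp W_def S_split[OF kn nN]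
      by (auto simp: A_def sp indicator_def ennreal_mult''[symmetric] exp_add[symmetric] algebra_simps)
  qed
  finally show ?thesis .
qed

definition "Q = (\<integral>\<^sup>+\<omega>. ennreal (exp (- lam * Z \<omega>)) \<partial>M)"

lemma int_W: "(\<integral>\<^sup>+\<omega>. W N \<omega> \<partial>M) = Q * (\<Prod>i\<in>{k..N}. m i)"
proof -
  define F0 :: "(nat + nat + unit \<Rightarrow> real) \<Rightarrow> ennreal" where "F0 x = ennreal (exp (- lam * Zf x))" for x
  have mF0: "F0 \<in> borel_measurable (PiM (Bset (k-1)) (\<lambda>_. borel))"
    unfolding F0_def using mZf[of "k-1"] by measurable
  have disj: "Bset (k-1) \<inter> Cset (k-1) N = {}" unfolding Bset_def Cset_def using k1 by auto
  have F0V: "F0 (restrict (\<lambda>z. V z \<omega>) (Bset (k-1))) = ennreal (exp (- lam * Z \<omega>))" for \<omega>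
    unfolding F0_def by (subst Zf_restrict) (auto simp: Zf_V Z_def)
  have kk: "{k-1<..N} = {k..N}" using k1 by auto
  have "(\<integral>\<^sup>+\<omega>. W N \<omega> \<partial>M) = (\<integral>\<^sup>+\<omega>. F0 (restrict (\<lambda>z. V z \<omega>) (Bset (k-1))) * Gf (k-1) N (restrict (\<lambda>z. V z \<omega>) (Cset (k-1) N)) \<partial>M)"
    unfolding F0V Gf_restrict Gf_V prod_exp W_def
  proof (intro nn_integral_cong)
    fix \<omega>
    have "exp (lam * (S N \<omega> - Z \<omega>)) = exp (- lam * Z \<omega>) * exp (lam * (\<Sum>i\<in>{k - 1<..N}. X' i \<omega> - X i \<omega>))"
      unfolding kk S_def by (simp add: exp_add[symmetric] algebra_simps)
    then show "ennreal (exp (lam * (S N \<omega> - Z \<omega>))) = ennreal (exp (- lam * Z \<omega>)) * ennreal (exp (lam * (\<Sum>i\<in>{k - 1<..N}. X' i \<omega> - X i \<omega>)))"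
      by (simp add: ennreal_mult''[symmetric])
  qed
  also have "\<dots> = (\<integral>\<^sup>+\<omega>. F0 (restrict (\<lambda>z. V z \<omega>) (Bset (k-1))) \<partial>M) * (\<integral>\<^sup>+\<omega>. Gf (k-1) N (restrict (\<lambda>z. V z \<omega>) (Cset (k-1) N)) \<partial>M)"
    by (rule BL[OF disj Bset_idx Cset_idx mF0 mGf])
  also have "\<dots> = Q * (\<Prod>i\<in>{k..N}. m i)"
    unfolding F0V Gf_restrict intG kk Q_def ..
  finally show ?thesis .
qed

lemma bound_E: "emeasure M (E N) \<le> Q * (\<Prod>i\<in>{k..N}. m i)"
proof -
  have "emeasure M (E N) = (\<integral>\<^sup>+\<omega>. indicator (E N) \<omega> \<partial>M)" by simp
  also have "\<dots> = (\<integral>\<^sup>+\<omega>. (\<Sum>n\<in>{k<..N}. indicator (A n) \<omega>) \<partial>M)"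
    by (intro nn_integral_cong) (simp add: sum_ind)
  also have "\<dots> = (\<Sum>n\<in>{k<..N}. emeasure M (A n))"
    by (subst nn_integral_sum) auto
  also have "\<dots> \<le> (\<Sum>n\<in>{k<..N}. \<integral>\<^sup>+\<omega>. indicator (A n) \<omega> * W N \<omega> \<partial>M)"
    by (intro sum_mono bound_A)
  also have "\<dots> = (\<integral>\<^sup>+\<omega>. (\<Sum>n\<in>{k<..N}. indicator (A n) \<omega> * W N \<omega>) \<partial>M)"
    by (subst nn_integral_sum) (auto simp: W_def)
  also have "\<dots> = (\<integral>\<^sup>+\<omega>. indicator (E N) \<omega> * W N \<omega> \<partial>M)"
    by (intro nn_integral_cong) (simp add: sum_ind sum_distrib_right[symmetric])
  also have "\<dots> \<le> (\<integral>\<^sup>+\<omega>. W N \<omega> \<partial>M)"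
    by (intro nn_integral_mono) (auto simp: indicator_def)
  finally show ?thesis unfolding int_W .
qed

end

theorem lemma3p4:
  fixes M :: "'a measure"
    and X X' :: "nat \<Rightarrow> 'a \<Rightarrow> real"
    and Y :: "'a \<Rightarrow> real"
    and k :: nat and lam :: real and L :: ennreal
  assumes "prob_space M"
    and indep: "prob_space.indep_vars M (\<lambda>_. borel) (all_vars X X' Y) all_idx"
    and same_distr: "distr M (PiM {1..} (\<lambda>_. borel)) (\<lambda>\<omega>. \<lambda>i\<in>{1..}. X i \<omega>)
                   = distr M (PiM {1..} (\<lambda>_. borel)) (\<lambda>\<omega>. \<lambda>i\<in>{1..}. X' i \<omega>)"
    and "k \<ge> 1"
    and "lam > 0"
    and prod_lim: "(\<lambda>n. \<Prod>i\<in>{k..n}. \<integral>\<^sup>+ \<omega>. ennreal (exp (lam * (X' i \<omega> - X i \<omega>))) \<partial>M)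
                    \<longlonglongrightarrow> L"
    and "L < \<infinity>"
  shows "emeasure M {\<omega> \<in> space M. \<exists>j\<ge>1.
            Y \<omega> + (\<Sum>i=1..k+j. X i \<omega>) \<le> (\<Sum>i=k..k+j. X' i \<omega>)}
         \<le> L * (\<integral>\<^sup>+ \<omega>. ennreal (exp (- lam * (Y \<omega> + (\<Sum>i=1..k-1. X i \<omega>)))) \<partial>M)"
proof -
  have "lctx M X X' Y k lam"
    unfolding lctx_def lctx_axioms_def using assms by auto
  then interpret lctx M X X' Y k lam .
  have key: "(Y \<omega> + (\<Sum>i=1..k+j. X i \<omega>) \<le> (\<Sum>i=k..k+j. X' i \<omega>)) \<longleftrightarrow> Z \<omega> \<le> S (k+j) \<omega>" for \<omega> j
  proof -
    have "{1..k+j} = {1..k-1} \<union> {k..k+j}" using k1 by auto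
    then have "(\<Sum>i=1..k+j. X i \<omega>) = (\<Sum>i=1..k-1. X i \<omega>) + (\<Sum>i=k..k+j. X i \<omega>)"
      by (simp add: sum.union_disjoint[symmetric] ivl_disj_int)
    then show ?thesis unfolding Z_def S_def sum_subtractf by linarith
  qed
  have seteq: "{\<omega> \<in> space M. \<exists>j\<ge>1. Y \<omega> + (\<Sum>i=1..k+j. X i \<omega>) \<le> (\<Sum>i=k..k+j. X' i \<omega>)} = (\<Union>N. E N)"
  proof (intro set_eqI iffI)
    fix \<omega> assume "\<omega> \<in> {\<omega> \<in> space M. \<exists>j\<ge>1. Y \<omega> + (\<Sum>i=1..k+j. X i \<omega>) \<le> (\<Sum>i=k..k+j. X' i \<omega>)}"
    then obtain j where "\<omega> \<in> space M" "j \<ge> 1" "Z \<omega> \<le> S (k+j) \<omega>" unfolding key by auto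
    then have "\<omega> \<in> E (k+j)" unfolding E_def by (auto intro!: bexI[of _ "k+j"])
    then show "\<omega> \<in> (\<Union>N. E N)" by auto
  next
    fix \<omega> assume "\<omega> \<in> (\<Union>N. E N)"
    then obtain N n where "\<omega> \<in> space M" "k < n" "Z \<omega> \<le> S n \<omega>" unfolding E_def by auto
    moreover have "n = k + (n - k)" using \<open>k < n\<close> by simp
    ultimately show "\<omega> \<in> {\<omega> \<in> space M. \<exists>j\<ge>1. Y \<omega> + (\<Sum>i=1..k+j. X i \<omega>) \<le> (\<Sum>i=k..k+j. X' i \<omega>)}"
      unfolding key by (auto intro!: exI[of _ "n - k"])
  qed
  define p where "p N = (\<Prod>i\<in>{k..N}. m i)" for N
  have inc: "incseq p"
  proof (rule incseq_SucI)
    fix N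
    show "p N \<le> p (Suc N)"
    proof (cases "k \<le> Suc N")
      case True
      then have "{k..Suc N} = insert (Suc N) {k..N}" by auto
      then have "p (Suc N) = m (Suc N) * p N" unfolding p_def by simp
      moreover have "1 \<le> m (Suc N)" by (rule m_ge1) simp
      ultimately show ?thesis by (metis mult_1 mult_right_mono zero_le)
    next
      case False
      then show ?thesis unfolding p_def by simp
    qed
  qed
  have lim: "p \<longlonglongrightarrow> L" using prod_lim unfolding p_def m_def .
  have pL: "p N \<le> L" for N by (rule incseq_le[OF inc lim])
  have "incseq E" unfolding incseq_def E_def by force
  then have "emeasure M (\<Union>N. E N) = (SUP N. emeasure M (E N))"
    by (intro SUP_emeasure_incseq[symmetric]) auto
  also have "\<dots> \<le> L * Q"
  proof (rule SUP_least)
    fix N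
    have "emeasure M (E N) \<le> Q * p N" unfolding p_def by (rule bound_E)
    also have "\<dots> \<le> Q * L" by (intro mult_left_mono pL) simp
    finally show "emeasure M (E N) \<le> L * Q" by (simp add: mult.commute)
  qed
  finally show ?thesis unfolding seteq Q_def Z_def .
qed

end
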